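(* Let $(X,\mathbb{Z}^k,T)$ be a continuum-wise expansive $\mathbb{Z}^k$-action with expansivity constant $2c>0$. Then there is $\delta>0$ with the following property. If $A\in C(X)$ and $N\ge1$ satisfy $$c\le\max\{\mathrm{diam}\,T^n(A): n\in[-N,N]^k\}\le 2c,$$ then $$\max\{\mathrm{diam}\,T^n(A): n\in\partial[-N,N]^k\}>\delta.$$
   Context: $X$ is a compact metric space with metric $d$, and $T\colon\mathbb{Z}^k\times X\to X$ is a continuous action. $C(X)$ is the set of nonempty connected closed subsets of $X$. A set is nondegenerate if it has at least two points. A constant $c'>0$ is an expansivity constant, and the action is continuum-wise expansive, if for every nondegenerate $A\in C(X)$ there is $n\in\mathbb{Z}^k$ with $\mathrm{diam}\,T^n(A)>c'$. $[-N,N]^k=\{(n_i)\in\mathbb{Z}^k: -N\le n_i\le N\}$ and $\partial[-N,N]^k=\{(n_i)\in[-N,N]^k: n_j\in\{-N,N\}\text{ for some }j\}$. *)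

theory Defs
  imports "HOL-Analysis.Analysis"
begin

text \<open>Z^k is rendered as the lattice type int^'k with 'k a finite index type
(k = CARD('k) >= 1). X is a compact subset of a metric space type.\<close>

definition zk_action :: "'a::metric_space set \<Rightarrow> (int^'k \<Rightarrow> 'a \<Rightarrow> 'a) \<Rightarrow> bool" where
  "zk_action X T \<longleftrightarrow>
     (\<forall>n. T n ` X \<subseteq> X \<and> continuous_on X (T n)) \<and>
     (\<forall>x\<in>X. T 0 x = x) \<and>
     (\<forall>m n. \<forall>x\<in>X. T (m + n) x = T m (T n x))"

definition continua :: "'a::metric_space set \<Rightarrow> 'a set set" where
  "continua X = {A. A \<subseteq> X \<and> A \<noteq> {} \<and> connected A \<and> closed A}"

definition nondegenerate :: "'a set \<Rightarrow> bool" where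
  "nondegenerate A \<longleftrightarrow> (\<exists>x\<in>A. \<exists>y\<in>A. x \<noteq> y)"

definition cw_expansivity_constant ::
  "'a::metric_space set \<Rightarrow> (int^'k \<Rightarrow> 'a \<Rightarrow> 'a) \<Rightarrow> real \<Rightarrow> bool" where
  "cw_expansivity_constant X T c' \<longleftrightarrow> c' > 0 \<and>
     (\<forall>A\<in>continua X. nondegenerate A \<longrightarrow> (\<exists>n. diameter (T n ` A) > c'))"

definition cube :: "nat \<Rightarrow> (int^'k) set" where
  "cube N = {n. \<forall>i. - int N \<le> n $ i \<and> n $ i \<le> int N}"

definition cube_boundary :: "nat \<Rightarrow> (int^'k) set" where
  "cube_boundary N = {n \<in> cube N. \<exists>j. n $ j = - int N \<or> n $ j = int N}"

end

theory Submission
  imports Defs "HOL-Complex_Analysis.Great_Picard"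
begin

lemma diam_le_metric:
  fixes S :: "'a::metric_space set"
  assumes "S \<noteq> {}" "\<And>x y. x\<in>S \<Longrightarrow> y\<in>S \<Longrightarrow> dist x y \<le> d"
  shows "diameter S \<le> d"
  using assms by (auto simp: diameter_def intro!: cSUP_least)

lemma countable_dense_compact:
  fixes X :: "'a::metric_space set"
  assumes "compact X"
  obtains D where "countable D" "D \<subseteq> X" "\<And>x e. x\<in>X \<Longrightarrow> e>0 \<Longrightarrow> \<exists>d\<in>D. dist x d < e"
proof -
  have "\<exists>K. K \<subseteq> X \<and> finite K \<and> X \<subseteq> (\<Union>c\<in>K. ball c (1 / real (Suc n)))" for n
  proof -
    have "X \<subseteq> (\<Union>c\<in>X. ball c (1 / real (Suc n)))" by force
    then obtain K where "K \<subseteq> X" "finite K" "X \<subseteq> (\<Union>c\<in>K. ball c (1 / real (Suc n)))"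
      using compactE_image[OF assms, of X "\<lambda>c. ball c (1 / real (Suc n))"] by auto
    then show ?thesis by blast
  qed
  then obtain K where K: "\<And>n. K n \<subseteq> X \<and> finite (K n) \<and> X \<subseteq> (\<Union>c\<in>K n. ball c (1 / real (Suc n)))"
    by metis
  show ?thesis
  proof
    show "countable (\<Union>n. K n)" using K by (auto intro: countable_finite)
    show "(\<Union>n. K n) \<subseteq> X" using K by auto
    fix x e assume "x \<in> X" "(e::real) > 0"
    then obtain n where n: "1 / real (Suc n) < e"
      by (metis nat_approx_posE)
    from K[of n] \<open>x\<in>X\<close> obtain c where "c \<in> K n" "dist c x < 1 / real (Suc n)" by auto
    then show "\<exists>d\<in>(\<Union>n. K n). dist x d < e" using n by (auto simp: dist_commute intro!: bexI[of _ c])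
  qed
qed

lemma tri3:
  fixes a b c d t e :: real
  assumes "\<bar>a - b\<bar> \<le> t" "\<bar>c - d\<bar> \<le> t" "\<bar>b - d\<bar> < e/3" "t < e/3"
  shows "\<bar>a - c\<bar> < e"
  using assms by linarith

lemma infdist_lessE:
  fixes A :: "'a::metric_space set"
  assumes "A \<noteq> {}" "infdist x A < d"
  obtains a where "a \<in> A" "dist x a < d"
  using assms by (auto simp: infdist_def cINF_less_iff)

lemma continuum_limit:
  fixes X :: "'a::metric_space set" and B :: "nat \<Rightarrow> 'a set"
  assumes X: "compact X" and B: "\<And>m. B m \<subseteq> X" "\<And>m. compact (B m)" "\<And>m. connected (B m)" "\<And>m. B m \<noteq> {}"
  obtains r C where "strict_mono r" "C \<subseteq> X" "compact C" "connected C" "C \<noteq> {}"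
    "\<And>x. x \<in> C \<Longrightarrow> \<exists>xs. (\<forall>m. xs m \<in> B (r m)) \<and> xs \<longlonglongrightarrow> x"
    "\<And>s ys y. strict_mono s \<Longrightarrow> (\<forall>j. ys j \<in> B (r (s j))) \<Longrightarrow> ys \<longlonglongrightarrow> y \<Longrightarrow> y \<in> C"
proof -
  obtain D where D: "countable D" "D \<subseteq> X" "\<And>x e. x\<in>X \<Longrightarrow> e>0 \<Longrightarrow> \<exists>d\<in>D. dist x d < e"
    using countable_dense_compact[OF X] by blast
  have bX: "bounded X" using X by (rule compact_imp_bounded)
  have bnd: "norm (infdist x (B n)) \<le> diameter X" if "x \<in> D" for n x
  proof -
    obtain b where "b \<in> B n" using B(4) by blast
    then have "infdist x (B n) \<le> dist x b" by (rule infdist_le)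
    also have "\<dots> \<le> diameter X" using diameter_bounded_bound[OF bX] \<open>x\<in>D\<close> D(2) B(1) \<open>b\<in>B n\<close> by blast
    finally show ?thesis using infdist_nonneg[of x "B n"] by simp
  qed
  obtain r where r: "strict_mono r" and conv: "\<And>x. x\<in>D \<Longrightarrow> \<exists>l. (\<lambda>n. infdist x (B (r n))) \<longlonglongrightarrow> l"
    using function_convergent_subsequence[of D "\<lambda>n x. infdist x (B n)" "diameter X"] D(1) bnd by blast
  define F where "F m x = infdist x (B (r m))" for m x
  have convX: "convergent (\<lambda>m. F m x)" if xX: "x \<in> X" for x
  proof -
    have "Cauchy (\<lambda>m. F m x)"
    proof (rule metric_CauchyI)
      fix e :: real assume "e > 0"
      then obtain d where d: "d \<in> D" "dist x d < e/3" using D(3)[OF xX, of "e/3"] by auto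
      obtain l where "(\<lambda>n. F n d) \<longlonglongrightarrow> l" using conv[OF d(1)] F_def by auto
      then have "Cauchy (\<lambda>n. F n d)" by (rule LIMSEQ_imp_Cauchy)
      then obtain M where M: "\<forall>m\<ge>M. \<forall>n\<ge>M. dist (F m d) (F n d) < e/3"
        using \<open>e>0\<close> metric_CauchyD[of "\<lambda>n. F n d" "e/3"] by force
      have "dist (F m x) (F n x) < e" if "m \<ge> M" "n \<ge> M" for m n
      proof -
        have h1: "\<bar>F m x - F m d\<bar> \<le> dist x d" "\<bar>F n x - F n d\<bar> \<le> dist x d"
          unfolding F_def by (rule infdist_triangle_abs)+
        have h2: "\<bar>F m d - F n d\<bar> < e/3" using M that by (auto simp: dist_real_def)
        show ?thesis unfolding dist_real_def by (rule tri3[OF h1 h2 d(2)])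
      qed
      then show "\<exists>M. \<forall>m\<ge>M. \<forall>n\<ge>M. dist (F m x) (F n x) < e" by blast
    qed
    then show ?thesis by (simp add: Cauchy_convergent_iff)
  qed
  define g where "g x = lim (\<lambda>m. F m x)" for x
  have Fg: "(\<lambda>m. F m x) \<longlonglongrightarrow> g x" if "x \<in> X" for x
    using convX[OF that] unfolding g_def by (simp add: convergent_LIMSEQ_iff)
  have glip: "\<bar>g x - g y\<bar> \<le> dist x y" if "x\<in>X" "y\<in>X" for x y
  proof -
    have "(\<lambda>m. \<bar>F m x - F m y\<bar>) \<longlonglongrightarrow> \<bar>g x - g y\<bar>" by (intro tendsto_intros Fg that)
    moreover have "\<forall>m. \<bar>F m x - F m y\<bar> \<le> dist x y" unfolding F_def by (simp add: infdist_triangle_abs)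
    ultimately show ?thesis by (meson LIMSEQ_le_const2)
  qed
  have gcont: "continuous_on X g"
    unfolding continuous_on_iff
  proof (intro ballI allI impI)
    fix x e assume "x\<in>X" "(e::real) > 0"
    show "\<exists>d>0. \<forall>x'\<in>X. dist x' x < d \<longrightarrow> dist (g x') (g x) < e"
      using glip \<open>x\<in>X\<close> \<open>e>0\<close> by (intro exI[of _ e]) (force simp: dist_real_def)
  qed
  have closX: "closed X" using X by (rule compact_imp_closed)
  have seqX: "seq_compact X" using X by (rule compact_imp_seq_compact)
  define C where "C = {x\<in>X. g x = 0}"
  have closedC: "closed C" unfolding C_def by (rule continuous_closed_preimage_constant[OF gcont closX])
  have CX: "C \<subseteq> X" by (auto simp: C_def)
  have compC: "compact C" using compact_Int_closed[OF X closedC] CX by (simp add: Int_absorb1)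
  have ptA: "\<exists>xs. (\<forall>m. xs m \<in> B (r m)) \<and> xs \<longlonglongrightarrow> x" if "x \<in> C" for x
  proof -
    have F0: "(\<lambda>m. F m x) \<longlonglongrightarrow> 0" using Fg[of x] that by (auto simp: C_def)
    have "\<exists>a. a \<in> B (r m) \<and> dist x a < F m x + inverse (real (Suc m))" for m
    proof -
      have "infdist x (B (r m)) < F m x + inverse (real (Suc m))" by (simp add: F_def)
      then show ?thesis using infdist_lessE[OF B(4)] by metis
    qed
    then obtain xs where xs: "\<And>m. xs m \<in> B (r m)" "\<And>m. dist x (xs m) < F m x + inverse (real (Suc m))"
      by metis
    have "(\<lambda>m. dist (xs m) x) \<longlonglongrightarrow> 0"
    proof (rule tendsto_sandwich[of "\<lambda>_. 0" _ _ "\<lambda>m. F m x + inverse (real (Suc m))"])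
      show "\<forall>\<^sub>F n in sequentially. 0 \<le> dist (xs n) x" by simp
      show "\<forall>\<^sub>F n in sequentially. dist (xs n) x \<le> F n x + inverse (real (Suc n))"
        using xs(2) by (simp add: dist_commute less_imp_le)
      show "(\<lambda>m. F m x + inverse (real (Suc m))) \<longlonglongrightarrow> 0"
        using tendsto_add[OF F0 LIMSEQ_inverse_real_of_nat] by simp
    qed simp
    then have "xs \<longlonglongrightarrow> x" by (rule tendsto_dist_iff[THEN iffD2])
    with xs show ?thesis by blast
  qed
  have ptB: "y \<in> C" if s: "strict_mono s" and ys: "\<forall>j. ys j \<in> B (r (s j))" and lim: "ys \<longlonglongrightarrow> y" for s ys y
  proof -
    have yX: "y \<in> X" by (rule closed_sequentially[OF closX _ lim]) (use ys B(1) in blast)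
    have "(\<lambda>j. F (s j) y) \<longlonglongrightarrow> 0"
    proof (rule tendsto_sandwich[of "\<lambda>_. 0" _ _ "\<lambda>j. dist (ys j) y"])
      show "\<forall>\<^sub>F j in sequentially. 0 \<le> F (s j) y" by (simp add: F_def infdist_nonneg)
      have "F (s j) y \<le> dist (ys j) y" for j
        unfolding F_def by (metis infdist_le dist_commute ys)
      then show "\<forall>\<^sub>F j in sequentially. F (s j) y \<le> dist (ys j) y" by simp
      show "(\<lambda>j. dist (ys j) y) \<longlonglongrightarrow> 0" by (rule tendsto_dist_iff[THEN iffD1, OF lim])
    qed simp
    moreover have "(\<lambda>j. F (s j) y) \<longlonglongrightarrow> g y" using LIMSEQ_subseq_LIMSEQ[OF Fg[OF yX] s] by (simp add: o_def)
    ultimately have "g y = 0" using LIMSEQ_unique by blast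
    with yX show ?thesis by (simp add: C_def)
  qed
  have ne: "C \<noteq> {}"
  proof -
    have "\<forall>m. \<exists>b. b \<in> B (r m)" using B(4) by blast
    then obtain bs where bs: "\<And>m. bs m \<in> B (r m)" by metis
    have "\<forall>j. bs j \<in> X" using bs B(1) by blast
    then obtain l t where "l\<in>X" "strict_mono t" "(bs \<circ> t) \<longlonglongrightarrow> l"
      using seq_compactE[OF seqX \<open>\<forall>j. _ \<in> X\<close>] by blast
    then have "l \<in> C" using ptB[of t "bs \<circ> t" l] bs by auto
    then show ?thesis by blast
  qed
  have conn: "connected C"
  proof (rule ccontr)
    assume "\<not> connected C"
    then obtain U V where UV: "closed U" "closed V" "U \<noteq> {}" "V \<noteq> {}" "U \<union> V = C" "U \<inter> V = {}"
      using connected_closed_set[OF closedC] by blast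
    define O1 where "O1 = {z. infdist z U < infdist z V}"
    define O2 where "O2 = {z. infdist z V < infdist z U}"
    have op: "open O1" "open O2" unfolding O1_def O2_def by (auto intro!: open_Collect_less continuous_intros)
    have dis: "O1 \<inter> O2 = {}" by (auto simp: O1_def O2_def)
    have UO: "U \<subseteq> O1"
    proof
      fix u assume "u\<in>U" then have "u \<notin> V" using UV by auto
      then have "infdist u V \<noteq> 0" using in_closed_iff_infdist_zero[OF UV(2) UV(4)] by blast
      then show "u \<in> O1" using \<open>u\<in>U\<close> infdist_nonneg[of u V] by (auto simp: O1_def)
    qed
    have VO: "V \<subseteq> O2"
    proof
      fix u assume "u\<in>V" then have "u \<notin> U" using UV by auto
      then have "infdist u U \<noteq> 0" using in_closed_iff_infdist_zero[OF UV(1) UV(3)] by blast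
      then show "u \<in> O2" using \<open>u\<in>V\<close> infdist_nonneg[of u U] by (auto simp: O2_def)
    qed
    have CO: "C \<subseteq> O1 \<union> O2" using UO VO UV(5) by blast
    have ev: "\<exists>M. \<forall>m\<ge>M. B (r m) \<subseteq> O1 \<union> O2"
    proof (rule ccontr)
      assume nev: "\<not> ?thesis"
      have "infinite {m. \<not> B (r m) \<subseteq> O1 \<union> O2}"
      proof
        assume "finite {m. \<not> B (r m) \<subseteq> O1 \<union> O2}"
        then obtain M where "\<forall>n\<in>{m. \<not> B (r m) \<subseteq> O1 \<union> O2}. n < M" using finite_nat_set_iff_bounded by blast
        then show False using nev by (meson leD mem_Collect_eq)
      qed
      then obtain s :: "nat \<Rightarrow> nat" where s: "strict_mono s" "\<And>j. \<not> B (r (s j)) \<subseteq> O1 \<union> O2"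
        using infinite_enumerate by blast
      then have "\<forall>j. \<exists>y. y \<in> B (r (s j)) \<and> y \<notin> O1 \<union> O2" by blast
      then obtain ys where ys: "\<And>j. ys j \<in> B (r (s j))" "\<And>j. ys j \<notin> O1 \<union> O2" by metis
      have ysX: "\<forall>j. ys j \<in> X" using ys(1) B(1) by blast
      then obtain l t where lt: "l\<in>X" "strict_mono t" "(ys \<circ> t) \<longlonglongrightarrow> l"
        using seq_compactE[OF seqX ysX] by blast
      have "l \<in> C" using ptB[of "s \<circ> t" "ys \<circ> t" l] lt ys(1) s(1) by (auto intro: strict_mono_o)
      then have "l \<in> O1 \<union> O2" using CO by blast
      moreover have "open (O1 \<union> O2)" using op by blast
      ultimately have "eventually (\<lambda>j. (ys \<circ> t) j \<in> O1 \<union> O2) sequentially"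
        using lt(3) topological_tendstoD by blast
      then show False using ys(2) by (auto simp: eventually_sequentially)
    qed
    then obtain M1 where M1: "\<And>m. m \<ge> M1 \<Longrightarrow> B (r m) \<subseteq> O1 \<union> O2" by blast
    obtain u v where "u \<in> U" "v \<in> V" using UV by blast
    then have "u \<in> C" "v \<in> C" using UV(5) by auto
    then obtain xs zs where xs: "\<forall>m. xs m \<in> B (r m)" "xs \<longlonglongrightarrow> u" and zs: "\<forall>m. zs m \<in> B (r m)" "zs \<longlonglongrightarrow> v"
      using ptA by metis
    have "eventually (\<lambda>m. xs m \<in> O1) sequentially"
      using topological_tendstoD[OF xs(2) op(1)] UO \<open>u\<in>U\<close> by blast
    moreover have "eventually (\<lambda>m. zs m \<in> O2) sequentially"
      using topological_tendstoD[OF zs(2) op(2)] VO \<open>v\<in>V\<close> by blast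
    ultimately have "eventually (\<lambda>m. xs m \<in> O1 \<and> zs m \<in> O2) sequentially" by (rule eventually_conj)
    then obtain M2 where M2: "\<And>m. m\<ge>M2 \<Longrightarrow> xs m \<in> O1 \<and> zs m \<in> O2" by (auto simp: eventually_sequentially)
    let ?m = "max M1 M2"
    have "O1 \<inter> B (r ?m) = {} \<or> O2 \<inter> B (r ?m) = {}"
      by (rule connectedD[OF B(3) op]) (use dis M1 in auto)
    then show False using M2[of ?m] xs(1) zs(1) by auto
  qed
  show ?thesis
    by (rule that[OF r CX compC conn ne]) (use ptA ptB in blast)+
qed

lemma finite_cube: "finite (cube N :: (int^'k) set)"
proof -
  have "cube N \<subseteq> (\<lambda>f. vec_lambda f) ` (PiE UNIV (\<lambda>_::'k. {-int N..int N}))"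
  proof
    fix v :: "int^'k" assume "v \<in> cube N"
    then have "vec_nth v \<in> PiE UNIV (\<lambda>_. {-int N..int N})" by (auto simp: cube_def PiE_iff)
    moreover have "v = vec_lambda (vec_nth v)" by simp
    ultimately show "v \<in> (\<lambda>f. vec_lambda f) ` (PiE UNIV (\<lambda>_::'k. {-int N..int N}))" by blast
  qed
  moreover have "finite (PiE (UNIV::'k set) (\<lambda>_. {-int N..int N}))" by (rule finite_PiE) auto
  ultimately show ?thesis using finite_subset by blast
qed

lemma zero_cube: "0 \<in> cube N"
  by (auto simp: cube_def)

lemma corner_boundary: "(\<chi> i. int N) \<in> cube_boundary N"
  by (auto simp: cube_boundary_def cube_def)

lemma unif_finite:
  fixes X :: "'a::metric_space set" and T :: "'v \<Rightarrow> 'a \<Rightarrow> 'a"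
  assumes X: "compact X" and S: "finite S" and cont: "\<And>v. v\<in>S \<Longrightarrow> continuous_on X (T v)" and e: "e>0"
  shows "\<exists>d>0. \<forall>v\<in>S. \<forall>x\<in>X. \<forall>y\<in>X. dist x y < d \<longrightarrow> dist (T v x) (T v y) < e"
  using S cont
proof (induction S rule: finite_induct)
  case empty
  show ?case by (auto intro: exI[of _ 1])
next
  case (insert v S)
  then obtain d1 where d1: "d1>0" "\<forall>v\<in>S. \<forall>x\<in>X. \<forall>y\<in>X. dist x y < d1 \<longrightarrow> dist (T v x) (T v y) < e"
    by auto
  have "uniformly_continuous_on X (T v)"
    by (rule compact_uniformly_continuous) (use insert.prems X in auto)
  then obtain d2 where d2: "d2>0" "\<forall>x\<in>X. \<forall>x'\<in>X. dist x' x < d2 \<longrightarrow> dist (T v x') (T v x) < e"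
    using e unfolding uniformly_continuous_on_def by blast
  show ?case
  proof (intro exI[of _ "min d1 d2"] conjI ballI impI)
    show "0 < min d1 d2" using d1 d2 by simp
    fix u x y assume "u \<in> insert v S" "x\<in>X" "y\<in>X" "dist x y < min d1 d2"
    then show "dist (T u x) (T u y) < e" using d1(2) d2(2) by auto
  qed
qed

lemma act_img:
  assumes "zk_action X T" "A \<subseteq> X"
  shows "T m ` (T n ` A) = T (m + n) ` A"
  using assms unfolding zk_action_def by (auto simp: image_iff) (metis subsetD)+

lemma act_compact:
  assumes "compact X" "zk_action X T" "A \<in> continua X"
  shows "compact (T n ` A)" "connected (T n ` A)" "T n ` A \<subseteq> X" "T n ` A \<noteq> {}"
proof -
  have AX: "A \<subseteq> X" and cA: "closed A" "connected A" "A \<noteq> {}" using assms(3) by (auto simp: continua_def)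
  have "compact A" using compact_Int_closed[OF assms(1) cA(1)] AX by (simp add: Int_absorb1)
  moreover have ct: "continuous_on A (T n)"
    using assms(2) AX by (auto simp: zk_action_def intro: continuous_on_subset)
  ultimately show "compact (T n ` A)" by (rule compact_continuous_image[rotated])
  show "connected (T n ` A)" using ct cA(2) by (rule connected_continuous_image)
  show "T n ` A \<subseteq> X" using assms(2) AX unfolding zk_action_def by blast
  show "T n ` A \<noteq> {}" using cA(3) by simp
qed

theorem lemma4p3:
  fixes X :: "'a::metric_space set" and T :: "int^'k \<Rightarrow> 'a \<Rightarrow> 'a" and c :: real
  assumes "compact X"
    and "zk_action X T"
    and "c > 0"
    and "cw_expansivity_constant X T (2 * c)"
  shows "\<exists>\<delta>>0. \<forall>A\<in>continua X. \<forall>N::nat. N \<ge> 1 \<longrightarrow>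
           c \<le> Max ((\<lambda>n. diameter (T n ` A)) ` cube N) \<longrightarrow>
           Max ((\<lambda>n. diameter (T n ` A)) ` cube N) \<le> 2 * c \<longrightarrow>
           Max ((\<lambda>n. diameter (T n ` A)) ` cube_boundary N) > \<delta>"
proof (rule ccontr)
  note X = assms(1) and act = assms(2) and c = assms(3)
  assume H: "\<not> ?thesis"
  have "\<exists>A N. A \<in> continua X \<and> N \<ge> 1 \<and> c \<le> Max ((\<lambda>n. diameter (T n ` A)) ` cube N) \<and>
           Max ((\<lambda>n. diameter (T n ` A)) ` cube N) \<le> 2 * c \<and>
           Max ((\<lambda>n. diameter (T n ` A)) ` cube_boundary N) \<le> inverse (real (Suc m))" for m
  proof -
    have "inverse (real (Suc m)) > 0" by simp
    with H show ?thesis by (meson not_less)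
  qed
  then obtain A N where AN: "\<And>m. A m \<in> continua X" "\<And>m. N m \<ge> 1"
     "\<And>m. c \<le> Max ((\<lambda>n. diameter (T n ` A m)) ` cube (N m))"
     "\<And>m. Max ((\<lambda>n. diameter (T n ` A m)) ` cube (N m)) \<le> 2 * c"
     "\<And>m. Max ((\<lambda>n. diameter (T n ` A m)) ` cube_boundary (N m)) \<le> inverse (real (Suc m))"
    by metis
  have fb: "finite (cube_boundary n :: (int^'k) set)" for n
    using finite_cube[of n] by (rule finite_subset[rotated]) (auto simp: cube_boundary_def)
  have "\<exists>v\<in>cube (N m). c \<le> diameter (T v ` A m)" for m
    using AN(3)[of m] Max_ge_iff[of "(\<lambda>n. diameter (T n ` A m)) ` cube (N m)" c]
      finite_cube[of "N m"] zero_cube[of "N m"] by auto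
  then obtain nn where nn: "\<And>m. nn m \<in> cube (N m)" "\<And>m. c \<le> diameter (T (nn m) ` A m)" by metis
  have up: "diameter (T v ` A m) \<le> 2 * c" if "v \<in> cube (N m)" for v m
  proof -
    have "diameter (T v ` A m) \<le> Max ((\<lambda>n. diameter (T n ` A m)) ` cube (N m))"
      by (rule Max_ge) (use finite_cube that in auto)
    then show ?thesis using AN(4)[of m] by linarith
  qed
  have bd: "diameter (T v ` A m) \<le> inverse (real (Suc m))" if "v \<in> cube_boundary (N m)" for v m
  proof -
    have "diameter (T v ` A m) \<le> Max ((\<lambda>n. diameter (T n ` A m)) ` cube_boundary (N m))"
      by (rule Max_ge) (use fb that in auto)
    then show ?thesis using AN(5)[of m] by linarith
  qed
  have AX: "A m \<subseteq> X" for m using AN(1) by (auto simp: continua_def)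
  have contT: "continuous_on X (T v)" for v using act by (auto simp: zk_action_def)
  have TX: "x \<in> X \<Longrightarrow> T v x \<in> X" for v x using act by (auto simp: zk_action_def)
  define B where "B m = T (nn m) ` A m" for m
  note ac = act_compact[OF X act AN(1)]
  obtain r C where r: "strict_mono r" and CX: "C \<subseteq> X" and cC: "compact C" "connected C" "C \<noteq> {}"
    and ptA: "\<And>x. x \<in> C \<Longrightarrow> \<exists>xs. (\<forall>m. xs m \<in> B (r m)) \<and> xs \<longlonglongrightarrow> x"
    and ptB: "\<And>s ys y. strict_mono s \<Longrightarrow> (\<forall>j. ys j \<in> B (r (s j))) \<Longrightarrow> ys \<longlonglongrightarrow> y \<Longrightarrow> y \<in> C"
    using continuum_limit[OF X, of B] ac unfolding B_def by metis
  have W: "\<exists>M. \<forall>m\<ge>M. nn (r m) + w \<in> cube (N (r m))" for w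
  proof -
    define L where "L = (\<Sum>i\<in>UNIV. nat \<bar>w $ i\<bar>)"
    have wL: "\<bar>w $ i\<bar> \<le> int L" for i
    proof -
      have "nat \<bar>w $ i\<bar> \<le> L" unfolding L_def by (rule member_le_sum) auto
      then show ?thesis by linarith
    qed
    have c2: "c/2 > 0" using c by simp
    obtain d where d: "d > 0" "\<forall>v\<in>cube L. \<forall>x\<in>X. \<forall>y\<in>X. dist x y < d \<longrightarrow> dist (T v x) (T v y) < c/2"
      using unif_finite[where T=T, OF X finite_cube[of L] contT c2] by blast
    obtain M where M: "inverse (real (Suc M)) < d" using reals_Archimedean[OF d(1)] by blast
    have "nn (r m) + w \<in> cube (N (r m))" if "m \<ge> M" for m
    proof (rule ccontr)
      define k where "k = r m"
      assume "nn (r m) + w \<notin> cube (N (r m))"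
      then have out: "nn k + w \<notin> cube (N k)" by (simp add: k_def)
      have kM: "M \<le> k" using seq_suble[OF r, of m] that by (simp add: k_def)
      have ik: "inverse (real (Suc k)) < d"
      proof -
        have "inverse (real (Suc k)) \<le> inverse (real (Suc M))" using kM by (simp add: field_simps)
        then show ?thesis using M by linarith
      qed
      have nk: "\<forall>i. - int (N k) \<le> nn k $ i \<and> nn k $ i \<le> int (N k)" using nn(1)[of k] by (simp add: cube_def)
      from out obtain j where j: "(nn k + w) $ j < - int (N k) \<or> (nn k + w) $ j > int (N k)"
        by (auto simp: cube_def not_le)
      define b where "b = (\<chi> i. if i = j then (if (nn k + w) $ j > int (N k) then int (N k) else - int (N k)) else nn k $ i)"
      have bB: "b \<in> cube_boundary (N k)"
        using nk unfolding cube_boundary_def cube_def b_def by auto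
      have dL: "nn k - b \<in> cube L"
        unfolding cube_def mem_Collect_eq
      proof (intro allI conjI)
        fix i
        show "- int L \<le> (nn k - b) $ i" "(nn k - b) $ i \<le> int L"
          using wL[of j] j nk[rule_format, of j] by (auto simp: b_def abs_le_iff)
      qed
      have img: "T (nn k) ` A k = T (nn k - b) ` (T b ` A k)"
        using act_img[OF act AX[of k], of "nn k - b" b] by simp
      have bdd: "bounded (T b ` A k)" using ac(1) by (rule compact_imp_bounded)
      have small: "dist (T (nn k) x) (T (nn k) y) < c/2" if "x \<in> A k" "y \<in> A k" for x y
      proof -
        have "dist (T b x) (T b y) \<le> diameter (T b ` A k)"
          using diameter_bounded_bound[OF bdd] that by blast
        also have "\<dots> \<le> inverse (real (Suc k))" using bd[OF bB] .
        finally have "dist (T b x) (T b y) < d" using ik by linarith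
        moreover have "T b x \<in> X" "T b y \<in> X" using that AX TX by blast+
        ultimately have "dist (T (nn k - b) (T b x)) (T (nn k - b) (T b y)) < c/2" using d(2) dL by blast
        moreover have "T (nn k) x = T (nn k - b) (T b x)" "T (nn k) y = T (nn k - b) (T b y)"
          using act that AX unfolding zk_action_def by (metis diff_add_cancel subsetD)+
        ultimately show ?thesis by simp
      qed
      have "diameter (T (nn k) ` A k) \<le> c/2"
        by (rule diam_le_metric) (use ac(4) small in \<open>auto simp: less_imp_le\<close>)
      then show False using nn(2)[of k] c by linarith
    qed
    then show ?thesis by blast
  qed
  have closedC: "closed C" using cC(1) by (rule compact_imp_closed)
  have Ccont: "C \<in> continua X" using CX closedC cC by (auto simp: continua_def)
  have BX: "B m \<subseteq> X" for m unfolding B_def using ac(3) .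
  have nd: "nondegenerate C"
  proof -
    have "\<exists>p\<in>B m. \<exists>q\<in>B m. dist p q = diameter (B m)" for m
      unfolding B_def by (rule diameter_compact_attained) (use ac in auto)
    then obtain p q where pq: "\<And>m. p m \<in> B m" "\<And>m. q m \<in> B m" "\<And>m. dist (p m) (q m) = diameter (B m)"
      by metis
    have sc: "seq_compact (X \<times> X)" using compact_Times[OF X X] by (rule compact_imp_seq_compact)
    have inn: "\<forall>m. (p (r m), q (r m)) \<in> X \<times> X" using pq BX by blast
    obtain l t where lt: "strict_mono t" "((\<lambda>m. (p (r m), q (r m))) \<circ> t) \<longlonglongrightarrow> l"
      using seq_compactE[OF sc inn] by blast
    have p1: "(\<lambda>j. p (r (t j))) \<longlonglongrightarrow> fst l" using tendsto_fst[OF lt(2)] by (simp add: o_def)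
    have q1: "(\<lambda>j. q (r (t j))) \<longlonglongrightarrow> snd l" using tendsto_snd[OF lt(2)] by (simp add: o_def)
    have i1: "\<forall>j. p (r (t j)) \<in> B (r (t j))" "\<forall>j. q (r (t j)) \<in> B (r (t j))" using pq by blast+
    have inC: "fst l \<in> C" "snd l \<in> C"
      using ptB[OF lt(1) i1(1) p1] ptB[OF lt(1) i1(2) q1] by auto
    have "c \<le> dist (fst l) (snd l)"
    proof (rule LIMSEQ_le_const[OF tendsto_dist[OF p1 q1]])
      have "c \<le> dist (p (r (t n))) (q (r (t n)))" for n
        using pq(3)[of "r (t n)"] nn(2)[of "r (t n)"] by (simp add: B_def)
      then show "\<exists>N. \<forall>n\<ge>N. c \<le> dist (p (r (t n))) (q (r (t n)))" by blast
    qed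
    then have "fst l \<noteq> snd l" using c by auto
    with inC show ?thesis unfolding nondegenerate_def by blast
  qed
  have exp: "\<forall>A\<in>continua X. nondegenerate A \<longrightarrow> (\<exists>n. diameter (T n ` A) > 2 * c)"
    using assms(4) unfolding cw_expansivity_constant_def by (rule conjunct2)
  obtain w where w: "diameter (T w ` C) > 2 * c"
    using exp Ccont nd by blast
  obtain M where M: "\<And>m. m \<ge> M \<Longrightarrow> nn (r m) + w \<in> cube (N (r m))" using W[of w] by blast
  have "diameter (T w ` C) \<le> 2 * c"
  proof (rule diam_le_metric)
    show "T w ` C \<noteq> {}" using cC(3) by simp
    fix a b assume "a \<in> T w ` C" "b \<in> T w ` C"
    then obtain x y where xy: "x \<in> C" "y \<in> C" "a = T w x" "b = T w y" by blast
    obtain xs where xs: "\<forall>m. xs m \<in> B (r m)" "xs \<longlonglongrightarrow> x" using ptA[OF xy(1)] by blast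
    obtain ys where ys: "\<forall>m. ys m \<in> B (r m)" "ys \<longlonglongrightarrow> y" using ptA[OF xy(2)] by blast
    have xsX: "\<forall>\<^sub>F m in sequentially. xs m \<in> X" by (intro always_eventually) (use xs(1) BX in blast)
    have ysX: "\<forall>\<^sub>F m in sequentially. ys m \<in> X" by (intro always_eventually) (use ys(1) BX in blast)
    have l1: "(\<lambda>m. T w (xs m)) \<longlonglongrightarrow> T w x"
      by (rule continuous_on_tendsto_compose[OF contT xs(2)]) (use xy CX xsX in auto)
    have l2: "(\<lambda>m. T w (ys m)) \<longlonglongrightarrow> T w y"
      by (rule continuous_on_tendsto_compose[OF contT ys(2)]) (use xy CX ysX in auto)
    have "dist (T w x) (T w y) \<le> 2 * c"
    proof (rule LIMSEQ_le_const2[OF tendsto_dist[OF l1 l2]])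
      have "dist (T w (xs m)) (T w (ys m)) \<le> 2 * c" if "m \<ge> M" for m
      proof -
        have eq: "T w ` B (r m) = T (nn (r m) + w) ` A (r m)"
          unfolding B_def using act_img[OF act AX, of w "nn (r m)" "r m"] by (simp add: add.commute)
        have "bounded (T w ` B (r m))" unfolding eq using ac(1) by (rule compact_imp_bounded)
        then have "dist (T w (xs m)) (T w (ys m)) \<le> diameter (T w ` B (r m))"
          by (rule diameter_bounded_bound) (use xs(1) ys(1) in auto)
        also have "\<dots> \<le> 2 * c" unfolding eq using up[OF M[OF that]] .
        finally show ?thesis .
      qed
      then show "\<exists>N. \<forall>n\<ge>N. dist (T w (xs n)) (T w (ys n)) \<le> 2 * c" by blast
    qed
    then show "dist a b \<le> 2 * c" using xy by simp
  qed
  then show False using w by linarith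
qed

end
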